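(* $$\sum_{n\ge0}|\mathfrak S_n(1243,2143,321)|x^n=1+x\frac{1-2x+3x^2}{(1-x)^4},$$ and consequently, for all $n\ge1$, $$|\mathfrak S_n(1243,2143,321)|=\binom{n-1}{0}+\binom{n-1}{1}+2\binom{n-1}{2}+2\binom{n-1}{3}.$$
   Context: $\mathfrak S_n(R)$ is the set of permutations of $\{1,\dots,n\}$ avoiding every pattern in $R$, where $\pi$ avoids $\sigma$ if no subsequence of $\pi$ has the same relative order as $\sigma$. *)

theory Defs
  imports "HOL-Computational_Algebra.Formal_Power_Series"
begin

definition perms :: "nat \<Rightarrow> nat list set" where
  "perms n = {p. distinct p \<and> set p = {1..n}}"

definition contains_pattern :: "nat list \<Rightarrow> nat list \<Rightarrow> bool" where
  "contains_pattern p s \<longleftrightarrow>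
     (\<exists>f. strict_mono_on {..<length s} f \<and> (\<forall>i<length s. f i < length p) \<and>
          (\<forall>i<length s. \<forall>j<length s. s ! i < s ! j \<longleftrightarrow> p ! (f i) < p ! (f j)))"

definition avoids :: "nat list \<Rightarrow> nat list set \<Rightarrow> bool" where
  "avoids p R \<longleftrightarrow> (\<forall>s\<in>R. \<not> contains_pattern p s)"

definition Av :: "nat \<Rightarrow> nat list set \<Rightarrow> nat list set" where
  "Av n R = {p \<in> perms n. avoids p R}"

end

theory Submission
  imports Defs
begin

unbundle fps_syntax


definition good :: "nat list \<Rightarrow> bool" where
  "good p \<longleftrightarrow> \<not>(\<exists>i j k. i<j \<and> j<k \<and> k<length p \<and> p!j < p!i \<and> p!k < p!j) \<and>
     \<not>(\<exists>i j k l. i<j \<and> j<k \<and> k<l \<and> l<length p \<and> p!i < p!l \<and> p!j < p!l \<and> p!l < p!k)"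

definition Avg :: "nat \<Rightarrow> nat list set" where "Avg n = {p \<in> perms n. good p}"
definition Fs :: "nat \<Rightarrow> nat list set" where "Fs n = {p \<in> perms n. good p \<and> last p \<noteq> n}"

lemma perms_length: "p \<in> perms n \<Longrightarrow> length p = n"
  unfolding perms_def using distinct_card by fastforce

lemma finite_perms: "finite (perms n)"
proof -
  have "perms n \<subseteq> {xs. set xs \<subseteq> {1..n} \<and> length xs = n}"
    using perms_length unfolding perms_def by auto
  moreover have "finite {xs. set xs \<subseteq> {1..n} \<and> length xs = n}"
    by (rule finite_lists_length_eq) simp
  ultimately show ?thesis by (rule finite_subset)
qed

lemma good_prefix:
  assumes g: "good (q @ r)"
  shows "good q"
proof -
  have e: "(q@r)!x = q!x" if "x < length q" for x using that by (simp add: nth_append)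
  show "good q" unfolding good_def
  proof (intro conjI notI)
    assume "\<exists>i j k. i<j \<and> j<k \<and> k<length q \<and> q!j < q!i \<and> q!k < q!j"
    then obtain i j k where h: "i<j" "j<k" "k<length q" "q!j < q!i" "q!k < q!j" by blast
    have "\<exists>i j k. i<j \<and> j<k \<and> k<length (q@r) \<and> (q@r)!j < (q@r)!i \<and> (q@r)!k < (q@r)!j"
      apply (rule exI[of _ i], rule exI[of _ j], rule exI[of _ k])
      using h e[of i] e[of j] e[of k] by simp
    then show False using g unfolding good_def by blast
  next
    assume "\<exists>i j k l. i<j \<and> j<k \<and> k<l \<and> l<length q \<and> q!i < q!l \<and> q!j < q!l \<and> q!l < q!k"
    then obtain i j k l where h: "i<j" "j<k" "k<l" "l<length q" "q!i < q!l" "q!j < q!l" "q!l < q!k" by blast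
    have "\<exists>i j k l. i<j \<and> j<k \<and> k<l \<and> l<length (q@r) \<and> (q@r)!i < (q@r)!l \<and> (q@r)!j < (q@r)!l \<and> (q@r)!l < (q@r)!k"
      apply (rule exI[of _ i], rule exI[of _ j], rule exI[of _ k], rule exI[of _ l])
      using h e[of i] e[of j] e[of k] e[of l] by simp
    then show False using g unfolding good_def by blast
  qed
qed

lemma good_snoc:
  assumes "\<forall>x\<in>set q. x < n"
  shows "good (q @ [n]) \<longleftrightarrow> good q"
proof
  assume g: "good (q @ [n])"
  show "good q" using good_prefix[OF g] .
next
  assume g: "good q"
  have e: "(q@[n])!x = q!x" if "x < length q" for x using that by (simp add: nth_append)
  have en: "(q@[n])!length q = n" by simp
  have lt: "q!x < n" if "x < length q" for x using assms that by simp
  show "good (q @ [n])" unfolding good_def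
  proof (intro conjI notI)
    assume "\<exists>i j k. i<j \<and> j<k \<and> k<length (q@[n]) \<and> (q@[n])!j < (q@[n])!i \<and> (q@[n])!k < (q@[n])!j"
    then obtain i j k where h: "i<j" "j<k" "k<length (q@[n])" "(q@[n])!j < (q@[n])!i" "(q@[n])!k < (q@[n])!j" by blast
    show False
    proof (cases "k < length q")
      case True
      have "\<exists>i j k. i<j \<and> j<k \<and> k<length q \<and> q!j < q!i \<and> q!k < q!j"
        apply (rule exI[of _ i], rule exI[of _ j], rule exI[of _ k])
        using h True e[of i] e[of j] e[of k] by simp
      then show ?thesis using g unfolding good_def by blast
    next
      case False
      then have "k = length q" using h by simp
      then show ?thesis using h e[of j] en lt[of j] by simp
    qed
  next
    assume "\<exists>i j k l. i<j \<and> j<k \<and> k<l \<and> l<length (q@[n]) \<and> (q@[n])!i < (q@[n])!l \<and> (q@[n])!j < (q@[n])!l \<and> (q@[n])!l < (q@[n])!k"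
    then obtain i j k l where h: "i<j" "j<k" "k<l" "l<length (q@[n])" "(q@[n])!i < (q@[n])!l" "(q@[n])!j < (q@[n])!l" "(q@[n])!l < (q@[n])!k" by blast
    show False
    proof (cases "l < length q")
      case True
      have "\<exists>i j k l. i<j \<and> j<k \<and> k<l \<and> l<length q \<and> q!i < q!l \<and> q!j < q!l \<and> q!l < q!k"
        apply (rule exI[of _ i], rule exI[of _ j], rule exI[of _ k], rule exI[of _ l])
        using h True e[of i] e[of j] e[of k] e[of l] by simp
      then show ?thesis using g unfolding good_def by blast
    next
      case False
      then have "l = length q" using h by simp
      then show ?thesis using h e[of k] en lt[of k] by simp
    qed
  qed
qed

lemma perms_snoc: "q \<in> perms (n - 1) \<Longrightarrow> n \<ge> 1 \<Longrightarrow> q @ [n] \<in> perms n"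
  unfolding perms_def by auto

lemma perms_butlast:
  assumes p: "p \<in> perms n" and n: "n \<ge> 1" and l: "last p = n"
  shows "p = butlast p @ [n]" "butlast p \<in> perms (n - 1)"
proof -
  have ne: "p \<noteq> []" using p n unfolding perms_def by auto
  show e: "p = butlast p @ [n]" using append_butlast_last_id[OF ne] l by simp
  have ds: "distinct p" "set p = {1..n}" using p unfolding perms_def by auto
  have d: "distinct (butlast p @ [n])" unfolding e[symmetric] by (rule ds(1))
  have s: "set (butlast p @ [n]) = {1..n}" unfolding e[symmetric] by (rule ds(2))
  have "set (butlast p) = {1..n} - {n}" using d s by auto
  also have "\<dots> = {1..n-1}" using n by auto
  finally show "butlast p \<in> perms (n - 1)" using d unfolding perms_def by simp
qed

lemma Avg_split:
  assumes n: "n \<ge> 1"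
  shows "Avg n = (\<lambda>q. q @ [n]) ` Avg (n - 1) \<union> Fs n"
proof (intro equalityI subsetI)
  fix p assume "p \<in> Avg n"
  then have p: "p \<in> perms n" "good p" unfolding Avg_def by auto
  show "p \<in> (\<lambda>q. q @ [n]) ` Avg (n - 1) \<union> Fs n"
  proof (cases "last p = n")
    case True
    note b = perms_butlast[OF p(1) n True]
    have "\<forall>x\<in>set (butlast p). x < n" using b(2) n unfolding perms_def by auto
    then have "good (butlast p)" using good_snoc p(2) b(1) by metis
    then show ?thesis using b unfolding Avg_def by auto
  next
    case False then show ?thesis using p unfolding Fs_def by auto
  qed
next
  fix p assume "p \<in> (\<lambda>q. q @ [n]) ` Avg (n - 1) \<union> Fs n"
  then show "p \<in> Avg n"
  proof
    assume "p \<in> (\<lambda>q. q @ [n]) ` Avg (n - 1)"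
    then obtain q where q: "q \<in> perms (n-1)" "good q" "p = q @ [n]" unfolding Avg_def by auto
    have "\<forall>x\<in>set q. x < n" using q(1) n unfolding perms_def by auto
    then show ?thesis using q good_snoc perms_snoc[OF q(1) n] unfolding Avg_def by auto
  qed (auto simp: Fs_def Avg_def)
qed

lemma Avg_rec:
  assumes n: "n \<ge> 1"
  shows "card (Avg n) = card (Avg (n - 1)) + card (Fs n)"
proof -
  have fin: "finite (Avg m)" for m using finite_perms unfolding Avg_def by auto
  have finF: "finite (Fs n)" using finite_perms unfolding Fs_def by auto
  have disj: "(\<lambda>q. q @ [n]) ` Avg (n - 1) \<inter> Fs n = {}" unfolding Fs_def by auto
  have inj: "inj_on (\<lambda>q. q @ [n]) (Avg (n - 1))" by (auto simp: inj_on_def)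
  have "card (Avg n) = card ((\<lambda>q. q @ [n]) ` Avg (n - 1)) + card (Fs n)"
    unfolding Avg_split[OF n] by (rule card_Un_disjoint[OF finite_imageI[OF fin] finF disj])
  also have "card ((\<lambda>q. q @ [n]) ` Avg (n - 1)) = card (Avg (n - 1))" by (rule card_image[OF inj])
  finally show ?thesis .
qed

lemma p0: "perms 0 = {[]}" unfolding perms_def by auto
lemma g0: "good []" unfolding good_def by simp
lemma Avg0: "Avg 0 = {[]}" using p0 g0 unfolding Avg_def by blast



lemma all3: "(\<forall>a<(3::nat). P a) \<longleftrightarrow> P 0 \<and> P 1 \<and> P 2"
  by (auto simp: less_Suc_eq numeral_eq_Suc)
lemma all4: "(\<forall>a<(4::nat). P a) \<longleftrightarrow> P 0 \<and> P 1 \<and> P 2 \<and> P 3"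
  by (auto simp: less_Suc_eq numeral_eq_Suc)

lemma c321: "contains_pattern p [3,2,1] \<longleftrightarrow>
   (\<exists>i j k. i<j \<and> j<k \<and> k<length p \<and> p!j < p!i \<and> p!k < p!j)"
proof
  assume "contains_pattern p [3,2,1]"
  then obtain f where f0: "strict_mono_on {..<length [3,2,1::nat]} f" "\<forall>i<length [3,2,1::nat]. f i < length p"
    "\<forall>i<length [3,2,1::nat]. \<forall>j<length [3,2,1::nat]. [3,2,1::nat] ! i < [3,2,1] ! j \<longleftrightarrow> p ! (f i) < p ! (f j)"
    unfolding contains_pattern_def by blast
  have l: "length [3,2,1::nat] = 3" by simp
  note f = f0[unfolded l]
  have "f 0 < f 1" "f 1 < f 2" using f(1) by (auto simp: strict_mono_on_def)
  moreover have "f 2 < length p" using f(2) by auto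
  moreover have "p!(f 1) < p!(f 0)" "p!(f 2) < p!(f 1)" using f(3) unfolding all3 by auto
  ultimately show "\<exists>i j k. i<j \<and> j<k \<and> k<length p \<and> p!j < p!i \<and> p!k < p!j" by blast
next
  assume "\<exists>i j k. i<j \<and> j<k \<and> k<length p \<and> p!j < p!i \<and> p!k < p!j"
  then obtain i j k where h: "i<j" "j<k" "k<length p" "p!j < p!i" "p!k < p!j" by blast
  define f where "f = (\<lambda>x::nat. [i,j,k]!x)"
  have "strict_mono_on {..<3} f" unfolding strict_mono_on_def f_def
    using h by (auto simp: less_Suc_eq numeral_eq_Suc)
  moreover have "\<forall>a<3. f a < length p" unfolding all3 f_def using h by auto
  moreover have "\<forall>a<3. \<forall>b<3. [3,2,1::nat] ! a < [3,2,1] ! b \<longleftrightarrow> p ! (f a) < p ! (f b)"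
    unfolding all3 f_def using h by auto
  moreover have l: "length [3,2,1::nat] = 3" by simp
  ultimately show "contains_pattern p [3,2,1]" unfolding contains_pattern_def l
    by blast
qed

lemma c4: "contains_pattern p s \<Longrightarrow> s = [1,2,4,3] \<or> s = [2,1,4,3] \<Longrightarrow>
   (\<exists>i j k l. i<j \<and> j<k \<and> k<l \<and> l<length p \<and> p!i < p!l \<and> p!j < p!l \<and> p!l < p!k)"
proof -
  assume "contains_pattern p s" and s: "s = [1,2,4,3] \<or> s = [2,1,4,3]"
  then obtain f where f0: "strict_mono_on {..<length s} f" "\<forall>i<length s. f i < length p"
    "\<forall>i<length s. \<forall>j<length s. s ! i < s ! j \<longleftrightarrow> p ! (f i) < p ! (f j)"
    unfolding contains_pattern_def by blast
  have l: "length s = 4" using s by auto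
  note f = f0[unfolded l]
  have "f 0 < f 1" "f 1 < f 2" "f 2 < f 3" using f(1) by (auto simp: strict_mono_on_def)
  moreover have "f 3 < length p" using f(2) by auto
  moreover have "p!(f 0) < p!(f 3)" "p!(f 1) < p!(f 3)" "p!(f 3) < p!(f 2)"
  proof -
    have q: "s!i < s!j \<longleftrightarrow> p!(f i) < p!(f j)" if "i < 4" "j < 4" for i j using f(3) that by blast
    have "s!0 < s!3" "s!1 < s!3" "s!3 < s!2" using s by auto
    then show "p!(f 0) < p!(f 3)" "p!(f 1) < p!(f 3)" "p!(f 3) < p!(f 2)" using q by auto
  qed
  ultimately show ?thesis by blast
qed

lemma c4': "distinct p \<Longrightarrow> (\<exists>i j k l. i<j \<and> j<k \<and> k<l \<and> l<length p \<and> p!i < p!l \<and> p!j < p!l \<and> p!l < p!k)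
   \<Longrightarrow> contains_pattern p [1,2,4,3] \<or> contains_pattern p [2,1,4,3]"
proof -
  assume d: "distinct p" and "(\<exists>i j k l. i<j \<and> j<k \<and> k<l \<and> l<length p \<and> p!i < p!l \<and> p!j < p!l \<and> p!l < p!k)"
  then obtain i j k l where h: "i<j" "j<k" "k<l" "l<length p" "p!i < p!l" "p!j < p!l" "p!l < p!k" by blast
  define f where "f = (\<lambda>x::nat. [i,j,k,l]!x)"
  have sm: "strict_mono_on {..<4} f" unfolding strict_mono_on_def f_def
    using h by (auto simp: less_Suc_eq numeral_eq_Suc)
  moreover have lt: "\<forall>a<4. f a < length p" unfolding all4 f_def using h by auto
  have "p!i \<noteq> p!j" using d h by (simp add: nth_eq_iff_index_eq)
  then consider "p!i < p!j" | "p!j < p!i" by linarith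
  then show ?thesis
  proof cases
    case 1
    have "\<forall>a<4. \<forall>b<4. [1,2,4,3::nat] ! a < [1,2,4,3] ! b \<longleftrightarrow> p ! (f a) < p ! (f b)"
      unfolding all4 f_def using h 1 by auto
    moreover have l: "length [1,2,4,3::nat] = 4" by simp
    ultimately have "contains_pattern p [1,2,4,3]" unfolding contains_pattern_def l
      using sm lt by blast
    then show ?thesis by blast
  next
    case 2
    have "\<forall>a<4. \<forall>b<4. [2,1,4,3::nat] ! a < [2,1,4,3] ! b \<longleftrightarrow> p ! (f a) < p ! (f b)"
      unfolding all4 f_def using h 2 by auto
    moreover have l: "length [2,1,4,3::nat] = 4" by simp
    ultimately have "contains_pattern p [2,1,4,3]" unfolding contains_pattern_def l
      using sm lt by blast
    then show ?thesis by blast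
  qed
qed

lemma avoids_good: "distinct p \<Longrightarrow> avoids p {[1,2,4,3],[2,1,4,3],[3,2,1]} \<longleftrightarrow> good p"
proof -
  assume d: "distinct p"
  have av: "avoids p {[1,2,4,3],[2,1,4,3],[3,2,1]} \<longleftrightarrow>
     \<not> contains_pattern p [1,2,4,3] \<and> \<not> contains_pattern p [2,1,4,3] \<and> \<not> contains_pattern p [3,2,1]"
    unfolding avoids_def by simp
  have q: "(contains_pattern p [1,2,4,3] \<or> contains_pattern p [2,1,4,3]) \<longleftrightarrow>
     (\<exists>i j k l. i<j \<and> j<k \<and> k<l \<and> l<length p \<and> p!i < p!l \<and> p!j < p!l \<and> p!l < p!k)"
  proof
    assume "contains_pattern p [1,2,4,3] \<or> contains_pattern p [2,1,4,3]"
    then show "\<exists>i j k l. i<j \<and> j<k \<and> k<l \<and> l<length p \<and> p!i < p!l \<and> p!j < p!l \<and> p!l < p!k"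
    proof
      assume "contains_pattern p [1,2,4,3]" then show ?thesis using c4[of p "[1,2,4,3]"] by simp
    next
      assume "contains_pattern p [2,1,4,3]" then show ?thesis using c4[of p "[2,1,4,3]"] by simp
    qed
  next
    assume "\<exists>i j k l. i<j \<and> j<k \<and> k<l \<and> l<length p \<and> p!i < p!l \<and> p!j < p!l \<and> p!l < p!k"
    then show "contains_pattern p [1,2,4,3] \<or> contains_pattern p [2,1,4,3]" using c4'[OF d] by blast
  qed
  show ?thesis unfolding av good_def c321[of p, symmetric] q[symmetric] by blast
qed



lemma no321:
  fixes n :: nat and g :: "nat \<Rightarrow> nat" and C :: "nat \<Rightarrow> bool"
  assumes mono: "\<And>i j. i<j \<Longrightarrow> j<n \<Longrightarrow> C i = C j \<Longrightarrow> g i < (g j::nat)"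
  shows "\<not>(\<exists>i j k. i<j \<and> j<k \<and> k<n \<and> g j < g i \<and> g k < g j)"
proof
  assume "\<exists>i j k. i<j \<and> j<k \<and> k<n \<and> g j < g i \<and> g k < g j"
  then obtain i j k where h: "i<j" "j<k" "k<n" "g j < g i" "g k < g j" by blast
  have "j < n" using h by linarith
  have "i < k" using h by linarith
  show False
  proof (cases "C i = C j")
    case True then show ?thesis using mono[of i j] h \<open>j<n\<close> by simp
  next
    case False
    then have "C j = C k \<or> C i = C k" by (cases "C i"; cases "C j"; cases "C k") auto
    then show ?thesis
    proof
      assume "C j = C k" then show ?thesis using mono[of j k] h by simp
    next
      assume "C i = C k" then show ?thesis using mono[of i k] h \<open>i<k\<close> by simp
    qed
  qed
qed

definition g3 :: "nat \<Rightarrow> nat \<Rightarrow> nat \<Rightarrow> nat \<Rightarrow> nat" where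
  "g3 n s t i = (if i<t then n-s+1+i else if i=t then 1 else if i \<le> s then n-s+i else i+1-s)"

locale g3loc =
  fixes n s t :: nat
  assumes s1: "1 \<le> s" and sn: "s < n" and ts: "t \<le> s"
begin

abbreviation "g \<equiv> g3 n s t"

lemma R1: "i < t \<Longrightarrow> g i + s = n + 1 + i" unfolding g3_def using sn by simp
lemma R2: "g t = 1" unfolding g3_def by simp
lemma R3: "t < i \<Longrightarrow> i \<le> s \<Longrightarrow> g i + s = n + i" unfolding g3_def using sn by simp
lemma R4: "s < i \<Longrightarrow> g i + s = i + 1" unfolding g3_def using ts by simp

definition "X i \<longleftrightarrow> i \<le> s \<and> i \<noteq> t"

lemma Xlow: "X i \<Longrightarrow> n + 1 \<le> g i + s"
  unfolding X_def using R1[of i] R3[of i] by (cases "i < t") auto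
lemma Yhigh: "\<not> X i \<Longrightarrow> i < n \<Longrightarrow> g i + s \<le> n"
  unfolding X_def using R2 R4[of i] s1 sn by (cases "i = t") auto
lemma gpos: "1 \<le> g i"
  unfolding g3_def by auto
lemma gle: "i < n \<Longrightarrow> g i \<le> n"
proof (cases "X i")
  case True
  then have "i \<le> s" unfolding X_def by simp
  then show ?thesis using R1[of i] R3[of i] True ts unfolding X_def by (cases "i < t") auto
next
  case False
  assume "i < n"
  then show ?thesis using Yhigh[OF False] s1 by linarith
qed

lemma mono: "i < j \<Longrightarrow> j < n \<Longrightarrow> X i = X j \<Longrightarrow> g i < g j"
proof -
  assume h: "i < j" "j < n" "X i = X j"
  show ?thesis
  proof (cases "X i")
    case True
    then have "X j" using h by simp
    then have j: "j \<le> s" "j \<noteq> t" and i: "i \<le> s" "i \<noteq> t" using True unfolding X_def by auto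
    show ?thesis
    proof (cases "j < t")
      case True then show ?thesis using R1[of i] R1[of j] h by simp
    next
      case False
      then have "t < j" using j by simp
      then show ?thesis using R1[of i] R3[of i] R3[of j] h i j by (cases "i < t") auto
    qed
  next
    case False
    then have "\<not> X j" using h by simp
    then have j: "j = t \<or> s < j" and i: "i = t \<or> s < i" using False unfolding X_def by auto
    show ?thesis
    proof (cases "i = t")
      case True
      then have "s < j" using j h by auto
      then show ?thesis using R2 R4[of j] True s1 by simp
    next
      case False
      then have "s < i" "s < j" using i j h by auto
      then show ?thesis using R4[of i] R4[of j] h by simp
    qed
  qed
qed

lemma inj: "inj_on g {0..<n}"
proof (rule inj_onI)
  fix x y assume "x \<in> {0..<n}" "y \<in> {0..<n}" "g x = g y"
  then have h: "x < n" "y < n" "g x = g y" by auto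
  show "x = y"
  proof (rule ccontr)
    assume "x \<noteq> y"
    then consider "x < y" | "y < x" by linarith
    then show False
    proof cases
      case 1
      show False
      proof (cases "X x = X y")
        case True then show ?thesis using mono[of x y] 1 h by simp
      next
        case False
        show ?thesis
        proof (cases "X x")
          case True
          then have "\<not> X y" using False by simp
          then show ?thesis using Xlow[OF True] Yhigh[of y] h by linarith
        next
          case F: False
          then have "X y" using False by simp
          then show ?thesis using Xlow[of y] Yhigh[OF F] h by linarith
        qed
      qed
    next
      case 2
      show False
      proof (cases "X x = X y")
        case True then show ?thesis using mono[of y x] 2 h by simp
      next
        case False
        show ?thesis
        proof (cases "X x")
          case True
          then have "\<not> X y" using False by simp
          then show ?thesis using Xlow[OF True] Yhigh[of y] h by linarith
        next
          case F: False
          then have "X y" using False by simp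
          then show ?thesis using Xlow[of y] Yhigh[OF F] h by linarith
        qed
      qed
    qed
  qed
qed

lemma n321: "\<not>(\<exists>i j k. i<j \<and> j<k \<and> k<n \<and> g j < g i \<and> g k < g j)"
  by (rule no321[of n X g]) (rule mono)

lemma nQ: "\<not>(\<exists>i j k l. i<j \<and> j<k \<and> k<l \<and> l<n \<and> g i < g l \<and> g j < g l \<and> g l < g k)"
proof
  assume "\<exists>i j k l. i<j \<and> j<k \<and> k<l \<and> l<n \<and> g i < g l \<and> g j < g l \<and> g l < g k"
  then obtain i j k l where h: "i<j" "j<k" "k<l" "l<n" "g i < g l" "g j < g l" "g l < g k" by blast
  have "k < n" "i < n" "j < n" using h by linarith+
  have "X k \<noteq> X l" using mono[of k l] h by auto
  moreover have "\<not> (X l \<and> \<not> X k)"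
  proof
    assume a: "X l \<and> \<not> X k"
    then show False using Xlow[of l] Yhigh[of k] h \<open>k<n\<close> by linarith
  qed
  ultimately have k: "X k" and l: "\<not> X l" by auto
  have "\<not> X i"
  proof
    assume "X i" then show False using Xlow[of i] Yhigh[OF l] h by linarith
  qed
  moreover have "\<not> X j"
  proof
    assume "X j" then show False using Xlow[of j] Yhigh[OF l] h by linarith
  qed
  moreover have "i \<le> s" "j \<le> s" using k h unfolding X_def by auto
  ultimately show False using h unfolding X_def by auto
qed

lemma lastne: "n \<ge> 2 \<Longrightarrow> (s = n - 1 \<Longrightarrow> t = s) \<Longrightarrow> g (n - 1) \<noteq> n"
proof -
  assume n2: "n \<ge> 2" and st: "s = n - 1 \<Longrightarrow> t = s"
  show ?thesis
  proof (cases "t = n - 1")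
    case True then show ?thesis using R2 n2 by simp
  next
    case False
    then have "s < n - 1" using st sn by linarith
    then show ?thesis using R4[of "n - 1"] s1 by linarith
  qed
qed

end

definition g2 :: "nat \<Rightarrow> nat \<Rightarrow> nat \<Rightarrow> nat \<Rightarrow> nat" where
  "g2 n m a i = (if i=0 then a else if i \<le> n-m then i+m else if i+m-n < a then i+m-n else i+m-n+1)"

locale g2loc =
  fixes n m a :: nat
  assumes m3: "3 \<le> m" and mn: "m < n" and a2: "2 \<le> a" and am: "a < m"
begin

abbreviation "g \<equiv> g2 n m a"

lemma S0: "g 0 = a" unfolding g2_def by simp
lemma S1: "0 < i \<Longrightarrow> i + m \<le> n \<Longrightarrow> g i = i + m"
proof -
  assume "0 < i" "i + m \<le> n"
  moreover have "i \<le> n - m" using \<open>i + m \<le> n\<close> by linarith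
  ultimately show ?thesis unfolding g2_def by simp
qed
lemma S2: "n < i + m \<Longrightarrow> i + m < n + a \<Longrightarrow> g i + n = i + m"
proof -
  assume h: "n < i + m" "i + m < n + a"
  have "i \<noteq> 0" using h mn by linarith
  moreover have "\<not> i \<le> n - m" using h mn by linarith
  moreover have "i + m - n < a" using h by linarith
  ultimately show ?thesis unfolding g2_def using h by simp
qed
lemma S3: "n + a \<le> i + m \<Longrightarrow> g i + n = i + m + 1"
proof -
  assume h: "n + a \<le> i + m"
  have "i \<noteq> 0" using h mn am by linarith
  moreover have "\<not> i \<le> n - m" using h mn a2 by linarith
  moreover have "\<not> i + m - n < a" using h by linarith
  ultimately show ?thesis unfolding g2_def using h by simp
qed

definition "X i \<longleftrightarrow> i + m \<le> n"

lemma Xv: "X i \<Longrightarrow> 0 < i \<Longrightarrow> m < g i" using S1[of i] unfolding X_def by simp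
lemma Yv: "\<not> X i \<Longrightarrow> i < n \<Longrightarrow> g i \<le> m \<and> g i \<noteq> a"
proof -
  assume h: "\<not> X i" "i < n"
  show ?thesis
  proof (cases "i + m < n + a")
    case True then show ?thesis using S2[of i] h unfolding X_def by simp
  next
    case False then show ?thesis using S3[of i] h unfolding X_def by simp
  qed
qed
lemma gpos: "1 \<le> g i" unfolding g2_def using a2 by auto
lemma gle: "i < n \<Longrightarrow> g i \<le> n"
proof -
  assume h: "i < n"
  show ?thesis
  proof (cases "X i")
    case True
    show ?thesis
    proof (cases "i = 0")
      case True then show ?thesis using S0 am mn by simp
    next
      case False then show ?thesis using S1[of i] \<open>X i\<close> unfolding X_def by simp
    qed
  next
    case False then show ?thesis using Yv[OF False h] mn by simp
  qed
qed

lemma mono: "i < j \<Longrightarrow> j < n \<Longrightarrow> X i = X j \<Longrightarrow> g i < g j"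
proof -
  assume h: "i < j" "j < n" "X i = X j"
  show ?thesis
  proof (cases "X i")
    case True
    then have "X j" using h by simp
    then have gj: "g j = j + m" using S1[of j] h unfolding X_def by simp
    show ?thesis
    proof (cases "i = 0")
      case True then show ?thesis using S0 gj am by simp
    next
      case False then show ?thesis using S1[of i] \<open>X i\<close> gj h unfolding X_def by simp
    qed
  next
    case False
    then have nx: "\<not> X i" "\<not> X j" using h by auto
    show ?thesis
    proof (cases "j + m < n + a")
      case True
      then show ?thesis using S2[of i] S2[of j] nx h unfolding X_def by simp
    next
      case F: False
      show ?thesis
      proof (cases "i + m < n + a")
        case True
        then show ?thesis using S2[of i] S3[of j] nx h F unfolding X_def by simp
      next
        case False
        then show ?thesis using S3[of i] S3[of j] nx h F unfolding X_def by simp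
      qed
    qed
  qed
qed

lemma Xval: "X i \<Longrightarrow> g i = a \<or> m < g i"
  using Xv[of i] S0 by (cases "i = 0") auto

lemma inj: "inj_on g {0..<n}"
proof (rule inj_onI)
  fix x y assume "x \<in> {0..<n}" "y \<in> {0..<n}" "g x = g y"
  then have h: "x < n" "y < n" "g x = g y" by auto
  show "x = y"
  proof (rule ccontr)
    assume ne: "x \<noteq> y"
    show False
    proof (cases "X x = X y")
      case True
      then show ?thesis using mono[of x y] mono[of y x] h ne by (cases "x < y") auto
    next
      case False
      show ?thesis
      proof (cases "X x")
        case True
        then have "\<not> X y" using False by simp
        then show ?thesis using Xval[OF True] Yv[of y] h by auto
      next
        case F: False
        then have "X y" using False by simp
        then show ?thesis using Xval[of y] Yv[OF F] h by auto
      qed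
    qed
  qed
qed

lemma n321: "\<not>(\<exists>i j k. i<j \<and> j<k \<and> k<n \<and> g j < g i \<and> g k < g j)"
  by (rule no321[of n X g]) (rule mono)

lemma nQ: "\<not>(\<exists>i j k l. i<j \<and> j<k \<and> k<l \<and> l<n \<and> g i < g l \<and> g j < g l \<and> g l < g k)"
proof
  assume "\<exists>i j k l. i<j \<and> j<k \<and> k<l \<and> l<n \<and> g i < g l \<and> g j < g l \<and> g l < g k"
  then obtain i j k l where h: "i<j" "j<k" "k<l" "l<n" "g i < g l" "g j < g l" "g l < g k" by blast
  have "k < n" using h by linarith
  have "X k \<noteq> X l" using mono[of k l] h by auto
  moreover have "X l \<Longrightarrow> X k" using h unfolding X_def by simp
  ultimately have k: "X k" and l: "\<not> X l" by auto
  have "X j" using k h unfolding X_def by simp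
  then have "m < g j" using Xv[of j] h by simp
  moreover have "g l \<le> m" using Yv[OF l] h by simp
  ultimately show False using h by simp
qed

lemma lastv: "g (n - 1) = m"
  using S3[of "n - 1"] am mn by simp

end



lemma mono_gap:
  fixes h :: "nat \<Rightarrow> nat"
  assumes mono: "\<And>r r'. r < r' \<Longrightarrow> r' < L \<Longrightarrow> h r < h r'"
  shows "a \<le> b \<Longrightarrow> b < L \<Longrightarrow> h a + (b - a) \<le> h b"
proof (induction b)
  case 0 then show ?case by simp
next
  case (Suc b)
  show ?case
  proof (cases "a = Suc b")
    case True then show ?thesis by simp
  next
    case False
    then have "a \<le> b" using Suc by simp
    then have "h a + (b - a) \<le> h b" using Suc by simp
    moreover have "h b < h (Suc b)" using mono[of b "Suc b"] Suc by simp
    ultimately show ?thesis using \<open>a \<le> b\<close> by linarith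
  qed
qed

lemma Fs_shape:
  assumes pp: "p \<in> perms n" and gp: "good p" and lp: "last p \<noteq> n" and n2: "2 \<le> n"
  shows "(\<exists>s t. 1 \<le> s \<and> s < n \<and> t \<le> s \<and> (s = n - 1 \<longrightarrow> t = s) \<and> p = map (g3 n s t) [0..<n])
       \<or> (\<exists>m a. 3 \<le> m \<and> m < n \<and> 2 \<le> a \<and> a < m \<and> p = map (g2 n m a) [0..<n])"
proof -
  have len: "length p = n" using perms_length[OF pp] .
  have dp: "distinct p" and sp: "set p = {1..n}" using pp unfolding perms_def by auto
  have val: "1 \<le> p!i \<and> p!i \<le> n" if "i < n" for i
    using nth_mem[of i p] that len sp by auto
  have inj: "i = j" if "i < n" "j < n" "p!i = p!j" for i j
    using that dp len nth_eq_iff_index_eq by metis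
  have surj: "\<exists>i<n. p!i = v" if "1 \<le> v" "v \<le> n" for v
  proof -
    have "v \<in> set p" using sp that by auto
    then show ?thesis using len by (auto simp: in_set_conv_nth)
  qed
  have n321: "\<not>(i<j \<and> j<k \<and> k<n \<and> p!j < p!i \<and> p!k < p!j)" for i j k
    using gp len unfolding good_def by blast
  have nQ: "\<not>(i<j \<and> j<k \<and> k<l \<and> l<n \<and> p!i < p!l \<and> p!j < p!l \<and> p!l < p!k)" for i j k l
    using gp len unfolding good_def by blast
  obtain k where k: "k < n" "p!k = n" using surj[of n] n2 by auto
  have ne: "p \<noteq> []" using len n2 by auto
  have lastv: "last p = p!(n-1)" using last_conv_nth[OF ne] len by simp
  define m where "m = p!(n-1)"
  have "k \<noteq> n - 1" using lp lastv k m_def by auto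
  then have kn: "k < n - 1" using k by simp
  have m1: "1 \<le> m" and mn: "m < n" using val[of "n-1"] n2 lp lastv m_def by auto
  have F1: "p!i < p!i'" if "k < i" "i < i'" "i' < n" for i i'
  proof (rule ccontr)
    assume "\<not> p!i < p!i'"
    moreover have "p!i \<noteq> p!i'" using inj[of i i'] that by auto
    ultimately have "p!i' < p!i" by simp
    moreover have "p!i < p!k" using val[of i] inj[of i k] k that by fastforce
    ultimately show False using n321[of k i i'] that by blast
  qed
  have after: "p!i \<le> m" if "k < i" "i < n" for i
  proof (cases "i = n - 1")
    case True then show ?thesis using m_def by simp
  next
    case False
    then have "i < n - 1" using that by linarith
    then show ?thesis using F1[of i "n-1"] that m_def by fastforce
  qed
  have F2: "False" if "i < i'" "i' < k" "p!i < m" "p!i' < m" for i i'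
    using nQ[of i i' k "n-1"] that kn k mn m_def by auto
  have notm: "p!i \<noteq> m" if "i < k" for i
    using inj[of i "n-1"] that kn m_def by auto
  define hA where "hA r = p!(k+1+r)" for r
  have hA_mono: "hA r < hA r'" if "r < r'" "r' < n - 1 - k" for r r'
    using F1[of "k+1+r" "k+1+r'"] that unfolding hA_def by simp
  have "k+1+(n-2-k) = n-1" using kn by linarith
  then have hA_last: "hA (n - 2 - k) = m" unfolding hA_def m_def by (rule arg_cong[where f="(!) p"])
  have hA_ge: "1 + r \<le> hA r" if "r < n - 1 - k" for r
  proof -
    have "k + 1 < n" using kn by linarith
    then have "1 \<le> hA 0" using val[of "k+1"] unfolding hA_def by simp
    then show ?thesis using mono_gap[of "n - 1 - k" hA, OF hA_mono, of 0 r] that by simp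
  qed
  have hA_le: "hA r + (n - 2 - k - r) \<le> m" if "r < n - 1 - k" for r
    using mono_gap[of "n - 1 - k" hA, OF hA_mono, of r "n - 2 - k"] that hA_last by simp
  have kA: "n - 1 - k \<le> m"
  proof -
    have "n - 2 - k < n - 1 - k" using kn by linarith
    then have "1 + (n - 2 - k) \<le> m" using hA_ge[of "n - 2 - k"] hA_last by simp
    then show ?thesis using kn by linarith
  qed
  have pA: "p!i = hA (i - k - 1)" if "k < i" for i
  proof -
    have "k + 1 + (i - k - 1) = i" using that by linarith
    then show ?thesis unfolding hA_def by simp
  qed
  have pn: "p!i < n" if "i < n" "i \<noteq> k" for i
    using val[of i] inj[of i k] that k by fastforce
  show ?thesis
  proof (cases "\<exists>t<k. p!t < m")
    case False
    then have big: "m < p!i" if "i < k" for i using notm[of i] that by force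
    have Bmono: "p!i < p!i'" if "i < i'" "i' < k" for i i'
    proof (rule ccontr)
      assume "\<not> p!i < p!i'"
      moreover have "p!i \<noteq> p!i'" using inj[of i i'] that k by auto
      ultimately have "p!i' < p!i" by simp
      moreover have "p!(n-1) < p!i'" using big[of i'] that m_def by simp
      moreover have "i' < n - 1" using that kn by linarith
      ultimately show False using n321[of i i' "n-1"] that n2 by auto
    qed
    have Bge: "m + 1 + r \<le> p!r" if "r < k" for r
      using mono_gap[of k "\<lambda>r. p!r", OF Bmono, of 0 r] that big[of 0] by simp
    have Ble: "p!r + (k - 1 - r) \<le> n - 1" if "r < k" for r
    proof -
      have "p!r + (k - 1 - r) \<le> p!(k-1)" using mono_gap[of k "\<lambda>r. p!r", OF Bmono, of r "k-1"] that by simp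
      moreover have "p!(k-1) < n" using pn[of "k-1"] that k by simp
      ultimately show ?thesis by linarith
    qed
    have kB: "k \<le> n - 1 - m"
    proof (cases "k = 0")
      case False
      then have "k - 1 < k" by simp
      then show ?thesis using Bge[of "k-1"] Ble[of "k-1"] by linarith
    qed simp
    have keq: "k = n - 1 - m" using kA kB mn by linarith
    have Bval: "p!r = m + 1 + r" if "r < k" for r using Bge[OF that] Ble[OF that] keq by linarith
    have Aval: "hA r = 1 + r" if "r < n - 1 - k" for r using hA_ge[OF that] hA_le[OF that] keq mn by linarith
    have "p = map (g3 n (k+1) (k+1)) [0..<n]"
    proof (rule nth_equalityI)
      show "length p = length (map (g3 n (k+1) (k+1)) [0..<n])" using len by simp
    next
      fix i assume "i < length p"
      then have i: "i < n" using len by simp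
      have "p!i = g3 n (k+1) (k+1) i"
      proof -
        consider "i < k" | "i = k" | "k < i" by linarith
        then show ?thesis
        proof cases
          case 1 then show ?thesis using Bval[of i] keq mn unfolding g3_def by simp
        next
          case 2 then show ?thesis using k keq mn unfolding g3_def by simp
        next
          case 3
          then have "i - k - 1 < n - 1 - k" using i by linarith
          then have "p!i = i - k" using pA[OF 3] Aval[of "i-k-1"] 3 by simp
          then show ?thesis using 3 unfolding g3_def by simp
        qed
      qed
      then show "p!i = map (g3 n (k+1) (k+1)) [0..<n] ! i" using i by simp
    qed
    moreover have "1 \<le> k + 1" "k + 1 < n" using kn by linarith+
    ultimately show ?thesis by blast
  next
    case True
    then obtain t where t: "t < k" "p!t < m" by blast
    define a where "a = p!t"
    have a1: "1 \<le> a" using val[of t] t k unfolding a_def by simp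
    have big: "m < p!i" if "i < k" "i \<noteq> t" for i
    proof (rule ccontr)
      assume "\<not> m < p!i"
      then have "p!i < m" using notm[of i] that by force
      then show False using F2[of i t] F2[of t i] t that by (cases "i < t") auto
    qed
    define hB where "hB r = p!(if r < t then r else r + 1)" for r
    have hB_mono: "hB r < hB r'" if "r < r'" "r' < k - 1" for r r'
    proof -
      define i where "i = (if r < t then r else r + 1)"
      define i' where "i' = (if r' < t then r' else r' + 1)"
      have ii: "i < i'" "i' < k" "i \<noteq> t" "i' \<noteq> t" using that unfolding i_def i'_def by auto
      have "p!i < p!i'"
      proof (rule ccontr)
        assume "\<not> p!i < p!i'"
        moreover have "p!i \<noteq> p!i'" using inj[of i i'] ii k by auto
        ultimately have "p!i' < p!i" by simp
        moreover have "p!(n-1) < p!i'" using big[of i'] ii m_def by simp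
        moreover have "i' < n - 1" using ii kn by linarith
        ultimately show False using n321[of i i' "n-1"] ii n2 by auto
      qed
      then show ?thesis unfolding hB_def i_def i'_def .
    qed
    have hB_big: "m < hB r" if "r < k - 1" for r
      unfolding hB_def using big[of "if r < t then r else r + 1"] that by auto
    have hB_lt: "hB r < n" if "r < k - 1" for r
      unfolding hB_def using pn[of "if r < t then r else r + 1"] that k by auto
    have Bge: "m + 1 + r \<le> hB r" if "r < k - 1" for r
    proof -
      have "0 < k - 1" using that by linarith
      then have "m < hB 0" using hB_big[of 0] by simp
      then show ?thesis using mono_gap[of "k - 1" hB, OF hB_mono, of 0 r] that by simp
    qed
    have Ble: "hB r + (k - 2 - r) \<le> n - 1" if "r < k - 1" for r
    proof -
      have "hB r + (k - 2 - r) \<le> hB (k - 2)"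
        using mono_gap[of "k - 1" hB, OF hB_mono, of r "k-2"] that by simp
      moreover have "hB (k - 2) < n" using hB_lt[of "k-2"] that by simp
      ultimately show ?thesis by linarith
    qed
    have kB: "k \<le> n - m"
    proof (cases "k = 1")
      case False
      then have "k - 2 < k - 1" using t by linarith
      then show ?thesis using Bge[of "k-2"] Ble[of "k-2"] by linarith
    qed (use mn in simp)
    have kA': "n - 1 - k \<noteq> m"
    proof
      assume e: "n - 1 - k = m"
      have am: "a - 1 < n - 1 - k" using t a1 e unfolding a_def by linarith
      have "hA (a - 1) = a" using hA_ge[OF am] hA_le[OF am] e a1 by linarith
      then have "p!(k + 1 + (a - 1)) = p!t" unfolding hA_def a_def by simp
      moreover have "k + 1 + (a - 1) < n" using am by linarith
      ultimately show False using inj[of "k + 1 + (a - 1)" t] t k by simp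
    qed
    have keq: "k = n - m" using kA kA' kB mn by linarith
    have Bval: "hB r = m + 1 + r" if "r < k - 1" for r using Bge[OF that] Ble[OF that] keq by linarith
    have Arange: "r + 1 \<le> hA r \<and> hA r \<le> r + 2" if "r < m - 1" for r
      using hA_ge[of r] hA_le[of r] that keq mn by simp
    have Ane: "hA r \<noteq> a" if "r < m - 1" for r
    proof
      assume "hA r = a"
      then have "p!(k + 1 + r) = p!t" unfolding hA_def a_def .
      moreover have "k + 1 + r < n" using that keq mn by linarith
      ultimately show False using inj[of "k + 1 + r" t] t k by simp
    qed
    have Am: "hA r < hA r'" if "r < r'" "r' < m - 1" for r r'
      using hA_mono[of r r'] that keq mn by simp
    have Aval: "hA r = (if r + 1 < a then r + 1 else r + 2)" if "r < m - 1" for r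
    proof (cases "r + 1 < a")
      case True
      show ?thesis
      proof (rule ccontr)
        assume "hA r \<noteq> (if r + 1 < a then r + 1 else r + 2)"
        then have "hA r = r + 2" using Arange[OF that] True by simp
        have r': "a - 2 < m - 1" "r \<le> a - 2" using True t that unfolding a_def by linarith+
        have "hA r + (a - 2 - r) \<le> hA (a - 2)"
          using mono_gap[of "m - 1" hA, OF Am, of r "a - 2"] r' by simp
        then have "hA (a - 2) = a" using Arange[OF r'(1)] \<open>hA r = r + 2\<close> True by linarith
        then show False using Ane[OF r'(1)] by simp
      qed
    next
      case False
      show ?thesis
      proof (rule ccontr)
        assume "hA r \<noteq> (if r + 1 < a then r + 1 else r + 2)"
        then have "hA r = r + 1" using Arange[OF that] False by simp
        then have "a < r + 1" using Ane[OF that] False by simp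
        have r': "a - 1 < m - 1" "a - 1 \<le> r" using \<open>a < r + 1\<close> that a1 by linarith+
        have "hA (a - 1) + (r - (a - 1)) \<le> hA r"
          using mono_gap[of "m - 1" hA, OF Am, of "a - 1" r] r' that by simp
        then have "hA (a - 1) = a" using Arange[OF r'(1)] \<open>hA r = r + 1\<close> a1 \<open>a < r + 1\<close> by linarith
        then show False using Ane[OF r'(1)] by simp
      qed
    qed
    have pB: "p!i = hB (i - 1)" if "t < i" for i
    proof -
      have "\<not> i - 1 < t" "i - 1 + 1 = i" using that by linarith+
      then show ?thesis unfolding hB_def by simp
    qed
    have pB': "p!i = hB i" if "i < t" for i using that unfolding hB_def by simp
    show ?thesis
    proof (cases "a = 1")
      case True
      have "p = map (g3 n k t) [0..<n]"
      proof (rule nth_equalityI)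
        show "length p = length (map (g3 n k t) [0..<n])" using len by simp
      next
        fix i assume "i < length p"
        then have i: "i < n" using len by simp
        have "p!i = g3 n k t i"
        proof -
          consider "i < t" | "i = t" | "t < i" "i < k" | "i = k" | "k < i" using t by linarith
          then show ?thesis
          proof cases
            case 1 then show ?thesis using pB' Bval[of i] keq mn t unfolding g3_def by simp
          next
            case 2 then show ?thesis using True unfolding g3_def a_def by simp
          next
            case 3
            then have "i - 1 < k - 1" by linarith
            then show ?thesis using pB[of i] Bval[of "i - 1"] keq mn 3 unfolding g3_def by simp
          next
            case 4 then show ?thesis using k keq mn t unfolding g3_def by simp
          next
            case 5
            then have "i - k - 1 < m - 1" using i keq mn by linarith
            then have "p!i = i - k + 1" using pA[OF 5] Aval[of "i-k-1"] 5 True by simp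
            then show ?thesis using 5 t unfolding g3_def by simp
          qed
        qed
        then show "p!i = map (g3 n k t) [0..<n] ! i" using i by simp
      qed
      moreover have "1 \<le> k" "k < n" "t \<le> k" using t k by linarith+
      moreover have "k \<noteq> n - 1" using keq t True unfolding a_def by linarith
      ultimately show ?thesis by blast
    next
      case False
      then have a2: "2 \<le> a" using a1 by simp
      have t0: "t = 0"
      proof (rule ccontr)
        assume "t \<noteq> 0"
        obtain l where l: "l < n" "p!l = 1" using surj[of 1] n2 by auto
        have "l \<noteq> k" using l k n2 by auto
        moreover have "\<not> l < k"
        proof
          assume "l < k"
          moreover have "l \<noteq> t" using l a2 unfolding a_def by auto
          ultimately have "m < p!l" using big by simp
          then show False using l m1 by simp
        qed
        ultimately have "k < l" by simp
        have "p!t < p!0" using big[of 0] t \<open>t \<noteq> 0\<close> by simp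
        moreover have "p!l < p!t" using l a2 unfolding a_def by simp
        ultimately show False using n321[of 0 t l] \<open>t \<noteq> 0\<close> \<open>k < l\<close> t l by simp
      qed
      have "p = map (g2 n m a) [0..<n]"
      proof (rule nth_equalityI)
        show "length p = length (map (g2 n m a) [0..<n])" using len by simp
      next
        fix i assume "i < length p"
        then have i: "i < n" using len by simp
        have "p!i = g2 n m a i"
        proof -
          consider "i = 0" | "0 < i" "i < k" | "i = k" | "k < i" using t by linarith
          then show ?thesis
          proof cases
            case 1 then show ?thesis using t0 unfolding g2_def a_def by simp
          next
            case 2
            then have "i - 1 < k - 1" "i \<le> n - m" using keq by linarith+
            then show ?thesis using pB[of i] Bval[of "i - 1"] keq mn 2 t0 unfolding g2_def by simp
          next
            case 3 then show ?thesis using k keq mn t unfolding g2_def by simp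
          next
            case 4
            then have "i - k - 1 < m - 1" using i keq mn by linarith
            moreover have "Suc (i - Suc k) = i - k" using 4 by linarith
            ultimately have "p!i = (if i - k < a then i - k else i - k + 1)" using pA[OF 4] Aval[of "i-k-1"] 4 by simp
            moreover have "\<not> i \<le> n - m" "i + m - n = i - k" "i \<noteq> 0" using 4 keq mn by linarith+
            ultimately show ?thesis unfolding g2_def by simp
          qed
        qed
        then show "p!i = map (g2 n m a) [0..<n] ! i" using i by simp
      qed
      moreover have "a < m" using t unfolding a_def by simp
      moreover have "3 \<le> m" using a2 \<open>a < m\<close> by linarith
      ultimately show ?thesis using a2 mn by blast
    qed
  qed
qed



lemma map_perms:
  assumes "inj_on g {0..<n}" "g ` {0..<n} \<subseteq> {1..n}"
  shows "map g [0..<n] \<in> perms n"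
proof -
  have "card (g ` {0..<n}) = n" using assms(1) by (simp add: card_image)
  then have "g ` {0..<n} = {1..n}" using assms(2) by (simp add: card_subset_eq)
  then show ?thesis unfolding perms_def using assms(1) by (simp add: distinct_map)
qed

lemma good_map: "good (map g [0..<n]) \<longleftrightarrow>
  \<not>(\<exists>i j k. i<j \<and> j<k \<and> k<n \<and> g j < g i \<and> g k < g j) \<and>
  \<not>(\<exists>i j k l. i<j \<and> j<k \<and> k<l \<and> l<n \<and> g i < g l \<and> g j < g l \<and> g l < g k)"
proof -
  let ?p = "map g [0..<n]"
  have e: "?p ! i = g i" if "i < n" for i using that by simp
  have l: "length ?p = n" by simp
  have 1: "(\<exists>i j k. i<j \<and> j<k \<and> k<length ?p \<and> ?p!j < ?p!i \<and> ?p!k < ?p!j) \<longleftrightarrow>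
     (\<exists>i j k. i<j \<and> j<k \<and> k<n \<and> g j < g i \<and> g k < g j)" (is "?A \<longleftrightarrow> ?B")
  proof
    assume ?A then obtain i j k where "i<j" "j<k" "k<length ?p" "?p!j < ?p!i" "?p!k < ?p!j" by blast
    then show ?B using e[of i] e[of j] e[of k] l by (intro exI[of _ i] exI[of _ j] exI[of _ k]) simp
  next
    assume ?B then obtain i j k where "i<j" "j<k" "k<n" "g j < g i" "g k < g j" by blast
    then show ?A using e[of i] e[of j] e[of k] l by (intro exI[of _ i] exI[of _ j] exI[of _ k]) simp
  qed
  have 2: "(\<exists>i j k l. i<j \<and> j<k \<and> k<l \<and> l<length ?p \<and> ?p!i < ?p!l \<and> ?p!j < ?p!l \<and> ?p!l < ?p!k) \<longleftrightarrow>
     (\<exists>i j k l. i<j \<and> j<k \<and> k<l \<and> l<n \<and> g i < g l \<and> g j < g l \<and> g l < g k)" (is "?A \<longleftrightarrow> ?B")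
  proof
    assume ?A then obtain i j k m where h: "i<j" "j<k" "k<m" "m<length ?p" "?p!i < ?p!m" "?p!j < ?p!m" "?p!m < ?p!k" by blast
    then have "i<n" "j<n" "k<n" "m<n" using l by linarith+
    then have "?p!i = g i" "?p!j = g j" "?p!k = g k" "?p!m = g m" using e by auto
    then show ?B using h l by (intro exI[of _ i] exI[of _ j] exI[of _ k] exI[of _ m]) simp
  next
    assume ?B then obtain i j k m where h: "i<j" "j<k" "k<m" "m<n" "g i < g m" "g j < g m" "g m < g k" by blast
    then have "i<n" "j<n" "k<n" by linarith+
    then have "?p!i = g i" "?p!j = g j" "?p!k = g k" "?p!m = g m" using e h(4) by auto
    then show ?A using h l by (intro exI[of _ i] exI[of _ j] exI[of _ k] exI[of _ m]) simp
  qed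
  show ?thesis unfolding good_def 1 2 ..
qed


lemma (in g3loc) one_pos: "i < n \<Longrightarrow> g i = 1 \<longleftrightarrow> i = t"
proof
  assume "i < n" "g i = 1"
  show "i = t"
  proof (rule ccontr)
    assume "i \<noteq> t"
    show False
    proof (cases "X i")
      case True then show ?thesis using Xlow[of i] \<open>g i = 1\<close> sn by linarith
    next
      case False
      then have "s < i" using \<open>i \<noteq> t\<close> unfolding X_def by auto
      then show ?thesis using R4[of i] \<open>g i = 1\<close> by linarith
    qed
  qed
qed (simp add: R2)

lemma (in g3loc) last_small: "s < n - 1 \<Longrightarrow> g (n - 1) + s = n"
  using R4[of "n - 1"] by linarith

lemma (in g3loc) first_prop: "(s = n - 1 \<longrightarrow> t = s) \<Longrightarrow> g 0 = 1 \<or> g (n - 1) < g 0"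
proof -
  assume st: "s = n - 1 \<longrightarrow> t = s"
  show ?thesis
  proof (cases "t = 0")
    case True then show ?thesis using R2 by simp
  next
    case False
    then have x0: "X 0" unfolding X_def by simp
    show ?thesis
    proof (cases "s = n - 1")
      case True
      then have "t = n - 1" using st by simp
      then have "g (n - 1) = 1" using R2 by simp
      moreover have "1 < g 0" using Xlow[OF x0] sn by linarith
      ultimately show ?thesis by simp
    next
      case False
      then have "s < n - 1" using sn by linarith
      then show ?thesis using last_small Xlow[OF x0] by fastforce
    qed
  qed
qed

definition P13 :: "nat \<Rightarrow> (nat \<times> nat) set" where
  "P13 n = insert (n - 1, n - 1) (SIGMA s:{1..<n-1}. {..s})"
definition P2 :: "nat \<Rightarrow> (nat \<times> nat) set" where
  "P2 n = (SIGMA m:{3..<n}. {2..<m})"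
definition G :: "nat \<Rightarrow> nat list set" where
  "G n = (\<lambda>(s,t). map (g3 n s t) [0..<n]) ` P13 n \<union> (\<lambda>(m,a). map (g2 n m a) [0..<n]) ` P2 n"

lemma P13_iff: "2 \<le> n \<Longrightarrow> (s,t) \<in> P13 n \<longleftrightarrow> 1 \<le> s \<and> s < n \<and> t \<le> s \<and> (s = n - 1 \<longrightarrow> t = s)"
  unfolding P13_def by auto

lemma g3_in_Fs:
  assumes "2 \<le> n" "(s,t) \<in> P13 n"
  shows "map (g3 n s t) [0..<n] \<in> Fs n"
proof -
  have h: "1 \<le> s" "s < n" "t \<le> s" "s = n - 1 \<longrightarrow> t = s" using P13_iff[OF assms(1)] assms(2) by auto
  interpret g3loc n s t using h by unfold_locales
  have "map g [0..<n] \<in> perms n"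
    by (rule map_perms[OF inj]) (use gpos gle in auto)
  moreover have "good (map g [0..<n])" unfolding good_map using n321 nQ by blast
  moreover have "last (map g [0..<n]) \<noteq> n" using lastne assms(1) h(4) by (simp add: last_map)
  ultimately show ?thesis unfolding Fs_def by blast
qed

lemma g2_in_Fs:
  assumes "(m,a) \<in> P2 n"
  shows "map (g2 n m a) [0..<n] \<in> Fs n"
proof -
  have h: "3 \<le> m" "m < n" "2 \<le> a" "a < m" using assms unfolding P2_def by auto
  interpret g2loc n m a using h by unfold_locales
  have "map g [0..<n] \<in> perms n"
    by (rule map_perms[OF inj]) (use gpos gle in auto)
  moreover have "good (map g [0..<n])" unfolding good_map using n321 nQ by blast
  moreover have "last (map g [0..<n]) \<noteq> n" using lastv h by (simp add: last_map)
  ultimately show ?thesis unfolding Fs_def by blast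
qed

lemma Fs_eq: "2 \<le> n \<Longrightarrow> Fs n = G n"
proof (intro equalityI subsetI)
  fix p assume n: "2 \<le> n" and "p \<in> Fs n"
  then have "p \<in> perms n" "good p" "last p \<noteq> n" unfolding Fs_def by auto
  from Fs_shape[OF this n] show "p \<in> G n"
  proof
    assume "\<exists>s t. 1 \<le> s \<and> s < n \<and> t \<le> s \<and> (s = n - 1 \<longrightarrow> t = s) \<and> p = map (g3 n s t) [0..<n]"
    then obtain s t where "1 \<le> s \<and> s < n \<and> t \<le> s \<and> (s = n - 1 \<longrightarrow> t = s)" "p = map (g3 n s t) [0..<n]" by blast
    moreover then have "(s,t) \<in> P13 n" using P13_iff[OF n] by blast
    ultimately show ?thesis unfolding G_def by force
  next
    assume "\<exists>m a. 3 \<le> m \<and> m < n \<and> 2 \<le> a \<and> a < m \<and> p = map (g2 n m a) [0..<n]"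
    then obtain m a where "3 \<le> m \<and> m < n \<and> 2 \<le> a \<and> a < m" "p = map (g2 n m a) [0..<n]" by blast
    moreover then have "(m,a) \<in> P2 n" unfolding P2_def by auto
    ultimately show ?thesis unfolding G_def by force
  qed
next
  fix p assume n: "2 \<le> n" and "p \<in> G n"
  then show "p \<in> Fs n" unfolding G_def
  proof (elim UnE imageE)
    fix x assume x: "x \<in> P13 n" "p = (\<lambda>(s,t). map (g3 n s t) [0..<n]) x"
    obtain s t where "x = (s,t)" by fastforce
    then show ?thesis using x g3_in_Fs[OF n, of s t] by simp
  next
    fix x assume x: "x \<in> P2 n" "p = (\<lambda>(m,a). map (g2 n m a) [0..<n]) x"
    obtain m a where "x = (m,a)" by fastforce
    then show ?thesis using x g2_in_Fs[of m a n] by simp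
  qed
qed

lemma map_eq_nth: "map f [0..<n] = map g [0..<n] \<Longrightarrow> i < n \<Longrightarrow> f i = g i"
proof -
  assume e: "map f [0..<n] = map g [0..<n]" and i: "i < n"
  have "\<forall>x\<in>{0..<n}. f x = g x" using e by simp
  then show ?thesis using i by simp
qed

lemma card_G: "2 \<le> n \<Longrightarrow> card (G n) = card (P13 n) + card (P2 n)"
proof -
  assume n: "2 \<le> n"
  have fin13: "finite (P13 n)" unfolding P13_def by auto
  have fin2: "finite (P2 n)" unfolding P2_def by auto
  have inj13: "inj_on (\<lambda>(s,t). map (g3 n s t) [0..<n]) (P13 n)"
  proof (rule inj_onI, clarify)
    fix s t s' t'
    assume a: "(s,t) \<in> P13 n" "(s',t') \<in> P13 n" and e: "map (g3 n s t) [0..<n] = map (g3 n s' t') [0..<n]"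
    have h: "1 \<le> s" "s < n" "t \<le> s" "s = n - 1 \<longrightarrow> t = s" using P13_iff[OF n] a(1) by auto
    have h': "1 \<le> s'" "s' < n" "t' \<le> s'" "s' = n - 1 \<longrightarrow> t' = s'" using P13_iff[OF n] a(2) by auto
    interpret A: g3loc n s t using h by unfold_locales
    interpret B: g3loc n s' t' using h' by unfold_locales
    have eq: "g3 n s t i = g3 n s' t' i" if "i < n" for i using map_eq_nth[OF e that] .
    have "t < n" "t' < n" using h h' by linarith+
    then have tt: "t = t'" using A.one_pos[of t] B.one_pos[of t] eq[of t] A.R2 by auto
    show "s = s' \<and> t = t'"
    proof (cases "s = n - 1")
      case True
      then have "t' = n - 1" using h tt by simp
      then have "s' = n - 1" using h' by linarith
      then show ?thesis using True tt by simp
    next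
      case False
      then have s1: "s < n - 1" using h by linarith
      have "s' \<noteq> n - 1" using h' tt h s1 by auto
      then have "s' < n - 1" using h' by linarith
      then show ?thesis using A.last_small[OF s1] B.last_small eq[of "n - 1"] n tt by fastforce
    qed
  qed
  have inj2: "inj_on (\<lambda>(m,a). map (g2 n m a) [0..<n]) (P2 n)"
  proof (rule inj_onI, clarify)
    fix m a m' a'
    assume a: "(m,a) \<in> P2 n" "(m',a') \<in> P2 n" and e: "map (g2 n m a) [0..<n] = map (g2 n m' a') [0..<n]"
    have h: "3 \<le> m" "m < n" "2 \<le> a" "a < m" using a(1) unfolding P2_def by auto
    have h': "3 \<le> m'" "m' < n" "2 \<le> a'" "a' < m'" using a(2) unfolding P2_def by auto
    interpret A: g2loc n m a using h by unfold_locales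
    interpret B: g2loc n m' a' using h' by unfold_locales
    have "g2 n m a 0 = g2 n m' a' 0" "g2 n m a (n-1) = g2 n m' a' (n-1)"
      using map_eq_nth[OF e] n by auto
    then show "m = m' \<and> a = a'" using A.S0 B.S0 A.lastv B.lastv by simp
  qed
  have disj: "(\<lambda>(s,t). map (g3 n s t) [0..<n]) ` P13 n \<inter> (\<lambda>(m,a). map (g2 n m a) [0..<n]) ` P2 n = {}"
  proof (rule ccontr)
    assume "\<not> ?thesis"
    then obtain s t m a where a: "(s,t) \<in> P13 n" "(m,a) \<in> P2 n"
      and e: "map (g3 n s t) [0..<n] = map (g2 n m a) [0..<n]" by auto
    have h: "1 \<le> s" "s < n" "t \<le> s" "s = n - 1 \<longrightarrow> t = s" using P13_iff[OF n] a(1) by auto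
    have h': "3 \<le> m" "m < n" "2 \<le> a" "a < m" using a(2) unfolding P2_def by auto
    interpret A: g3loc n s t using h by unfold_locales
    interpret B: g2loc n m a using h' by unfold_locales
    have "g3 n s t 0 = g2 n m a 0" "g3 n s t (n-1) = g2 n m a (n-1)"
      using map_eq_nth[OF e] n by auto
    then show False using A.first_prop[OF h(4)] B.S0 B.lastv h' by auto
  qed
  show ?thesis unfolding G_def
    using card_Un_disjoint[OF finite_imageI[OF fin13] finite_imageI[OF fin2] disj]
      card_image[OF inj13] card_image[OF inj2] by simp
qed

lemma card_P13: "2 \<le> n \<Longrightarrow> card (P13 n) = 1 + (\<Sum>s\<in>{1..<n-1}. s + 1)"
proof -
  assume n: "2 \<le> n"
  have "(n - 1, n - 1) \<notin> (SIGMA s:{1..<n-1}. {..s})" by auto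
  moreover have "finite (SIGMA s:{1..<n-1}. {..s})" by auto
  ultimately have "card (P13 n) = 1 + card (SIGMA s:{1..<n-1}. {..s})" unfolding P13_def by simp
  also have "card (SIGMA s:{1..<n-1}. {..s}) = (\<Sum>s\<in>{1..<n-1}. s + 1)"
    by (simp add: card_SigmaI)
  finally show ?thesis .
qed

lemma card_P2: "card (P2 n) = (\<Sum>m\<in>{3..<n}. m - 2)"
  unfolding P2_def by (simp add: card_SigmaI)

lemma sums: "(\<Sum>s\<in>{1..<k+1}. s + 1) + (\<Sum>m\<in>{3..<k+2}. m - 2) = k * k + (k::nat)"
proof (induction k)
  case 0 then show ?case by simp
next
  case (Suc k)
  have "(\<Sum>s\<in>{1..<Suc k+1}. s + 1) = (\<Sum>s\<in>{1..<k+1}. s + 1) + (k + 2)" by simp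
  moreover have "(\<Sum>m\<in>{3..<Suc k+2}. m - 2) = (\<Sum>m\<in>{3..<k+2}. m - 2) + k"
  proof (cases "k = 0")
    case True then show ?thesis by simp
  next
    case False
    then have "{3..<Suc k+2} = insert (k+2) {3..<k+2}" by auto
    then show ?thesis by simp
  qed
  moreover have "Suc k * Suc k + Suc k = k * k + k + 2 * k + 2" by simp
  ultimately show ?case using Suc.IH by linarith
qed

lemma card_Fs: "card (Fs (k + 2)) = k * k + k + 1"
proof -
  have n: "2 \<le> k + 2" by simp
  have "card (Fs (k+2)) = 1 + (\<Sum>s\<in>{1..<k+1}. s + 1) + (\<Sum>m\<in>{3..<k+2}. m - 2)"
    unfolding Fs_eq[OF n] card_G[OF n] card_P13[OF n] card_P2 by simp
  then show ?thesis using sums[of k] by simp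
qed

lemma Fs1: "Fs 1 = {}"
proof -
  have "perms 1 = {[1]}"
  proof (intro equalityI subsetI)
    fix p assume "p \<in> perms 1"
    then have "length p = 1" "set p = {1}" using perms_length unfolding perms_def by auto
    then show "p \<in> {[1]}" by (cases p) auto
  qed (auto simp: perms_def)
  then show ?thesis unfolding Fs_def by auto
qed




lemma diff1: "Abs_fps f * (1 - fps_X) = Abs_fps (\<lambda>n. f n - (if n = 0 then 0 else f (n - 1)))"
  for f :: "nat \<Rightarrow> rat"
  by (simp add: fps_eq_iff algebra_simps mult.commute[of _ fps_X])

lemma numtimes: "(numeral k * f) $ n = numeral k * (f $ n :: rat)"
  by (simp add: numeral_fps_const)

lemma fps_part:
  fixes a :: "nat \<Rightarrow> nat"
  assumes a0: "a 0 = 1"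
    and an: "\<forall>n\<ge>1. a n = (n - 1 choose 0) + (n - 1 choose 1) + 2 * (n - 1 choose 2) + 2 * (n - 1 choose 3)"
  shows "Abs_fps (\<lambda>n. of_nat (a n)) = (1 + fps_X * (1 - 2 * fps_X + 3 * fps_X ^ 2) / (1 - fps_X) ^ 4 :: rat fps)"
proof -
  define c :: "nat \<Rightarrow> rat" where "c n = (if n = 0 then 1 else
      1 + of_nat (n-1) + of_nat (n-1) * (of_nat n - 2) + of_nat (n-1) * (of_nat n - 2) * (of_nat n - 3) / 3)" for n
  have ca: "of_nat (a n) = c n" for n
  proof (cases n)
    case 0 then show ?thesis using a0 by (simp add: c_def)
  next
    case (Suc k)
    have "a n = 1 + k + 2 * (k choose 2) + 2 * (k choose 3)" using an Suc by simp
    then have "(of_nat (a n) :: rat) = 1 + of_nat k + 2 * of_nat (k choose 2) + 2 * of_nat (k choose 3)" by simp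
    also have "\<dots> = c n" 
      by (simp add: Suc c_def binomial_gbinomial gbinomial_pochhammer' pochhammer_prod numeral_eq_Suc prod.atLeast0_lessThan_Suc algebra_simps)
        (simp add: field_simps)
    finally show ?thesis .
  qed
  define D :: "rat fps" where "D = (1 - fps_X) ^ 4"
  have D0: "D $ 0 \<noteq> 0" by (simp add: D_def)
  have AD: "Abs_fps (\<lambda>n. of_nat (a n)) * D = D + fps_X * (1 - 2 * fps_X + 3 * fps_X ^ 2)"
  proof -
    have "Abs_fps (\<lambda>n. of_nat (a n)) * D = Abs_fps c * (1 - fps_X) * (1 - fps_X) * (1 - fps_X) * (1 - fps_X)"
      by (simp add: ca D_def power4_eq_xxxx mult.assoc)
    also have "\<dots> = 1 - 3 * fps_X + 4 * fps_X^2 - fps_X^3 + fps_X^4"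
      unfolding diff1
      apply (rule fps_ext)
      subgoal for n
      proof -
      consider "(n::nat)=0" | "n=1" | "n=2" | "n=3" | "n=4" | k where "n = k+5" by atomize_elim presburger
      then show ?thesis
      proof cases
        case 6
        then show ?thesis by (simp add: c_def numtimes fps_numeral_nth algebra_simps) (simp add: field_simps)
      qed (simp_all add: c_def numtimes fps_numeral_nth)
    qed
    done
    also have "\<dots> = D + fps_X * (1 - 2 * fps_X + 3 * fps_X ^ 2)"
      by (simp add: D_def algebra_simps power2_eq_square power3_eq_cube power4_eq_xxxx)
    finally show ?thesis .
  qed
  have "Abs_fps (\<lambda>n. of_nat (a n)) = Abs_fps (\<lambda>n. of_nat (a n)) * D * inverse D"
    using inverse_mult_eq_1'[OF D0] by (simp add: mult.assoc)
  also have "\<dots> = D * inverse D + fps_X * (1 - 2 * fps_X + 3 * fps_X ^ 2) * inverse D"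
    unfolding AD by (simp add: algebra_simps)
  also have "\<dots> = 1 + fps_X * (1 - 2 * fps_X + 3 * fps_X ^ 2) / D"
    using inverse_mult_eq_1'[OF D0] fps_divide_unit[OF D0] by simp
  finally show ?thesis unfolding D_def .
qed

lemma choose2: "2 * (j choose 2) + j = j * (j::nat)"
proof (induction j)
  case 0 then show ?case by simp
next
  case (Suc j)
  have "Suc j choose 2 = (j choose 1) + (j choose 2)" using binomial_Suc_Suc[of j 1] by (simp add: numeral_2_eq_2)
  then show ?case using Suc.IH by simp
qed

lemma card_Avg: "card (Avg (j + 1)) = (j choose 0) + (j choose 1) + 2 * (j choose 2) + 2 * (j choose 3)"
proof (induction j)
  case 0
  have "card (Avg 1) = card (Avg 0) + card (Fs 1)" using Avg_rec[of 1] by simp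
  then show ?case using Avg0 Fs1 by simp
next
  case (Suc j)
  have "card (Avg (Suc j + 1)) = card (Avg (j + 1)) + card (Fs (j + 2))" using Avg_rec[of "j + 2"] by simp
  also have "\<dots> = (j choose 0) + (j choose 1) + 2 * (j choose 2) + 2 * (j choose 3) + (j * j + j + 1)"
    using Suc.IH card_Fs[of j] by simp
  also have "\<dots> = (Suc j choose 0) + (Suc j choose 1) + 2 * (Suc j choose 2) + 2 * (Suc j choose 3)"
  proof -
    have "Suc j choose 2 = (j choose 1) + (j choose 2)" using binomial_Suc_Suc[of j 1] by (simp add: numeral_2_eq_2)
    moreover have "Suc j choose 3 = (j choose 2) + (j choose 3)" using binomial_Suc_Suc[of j 2] by (simp add: numeral_3_eq_3)
    ultimately show ?thesis using choose2[of j] by simp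
  qed
  finally show ?case .
qed

lemma Av_eq: "Av n {[1,2,4,3],[2,1,4,3],[3,2,1]} = Avg n"
  unfolding Av_def Avg_def
proof (rule Collect_cong)
  fix p
  show "(p \<in> perms n \<and> avoids p {[1,2,4,3],[2,1,4,3],[3,2,1]}) = (p \<in> perms n \<and> good p)"
  proof (cases "p \<in> perms n")
    case True
    then have "distinct p" unfolding perms_def by simp
    then have e: "avoids p {[1,2,4,3],[2,1,4,3],[3,2,1]} \<longleftrightarrow> good p" by (rule avoids_good)
    show ?thesis using e True by blast
  next
    case False then show ?thesis by blast
  qed
qed

theorem mainTheorem14:
  shows "Abs_fps (\<lambda>n. of_nat (card (Av n {[1,2,4,3],[2,1,4,3],[3,2,1]}))) =
           (1 + fps_X * (1 - 2 * fps_X + 3 * fps_X ^ 2) / (1 - fps_X) ^ 4 :: rat fps)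
         \<and> (\<forall>n\<ge>1. card (Av n {[1,2,4,3],[2,1,4,3],[3,2,1]}) =
              (n - 1 choose 0) + (n - 1 choose 1) + 2 * (n - 1 choose 2) + 2 * (n - 1 choose 3))"
proof -
  have c: "\<forall>n\<ge>1. card (Av n {[1,2,4,3],[2,1,4,3],[3,2,1]}) =
              (n - 1 choose 0) + (n - 1 choose 1) + 2 * (n - 1 choose 2) + 2 * (n - 1 choose 3)"
  proof (intro allI impI)
    fix n :: nat assume n1: "1 \<le> n"
    have e: "n - 1 + 1 = n" using n1 by simp
    have "card (Av n {[1,2,4,3],[2,1,4,3],[3,2,1]}) = card (Avg n)" by (simp only: Av_eq)
    also have "\<dots> = card (Avg (n - 1 + 1))" by (simp only: e)
    also have "\<dots> = (n - 1 choose 0) + (n - 1 choose 1) + 2 * (n - 1 choose 2) + 2 * (n - 1 choose 3)"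
      by (rule card_Avg)
    finally show "card (Av n {[1,2,4,3],[2,1,4,3],[3,2,1]}) =
              (n - 1 choose 0) + (n - 1 choose 1) + 2 * (n - 1 choose 2) + 2 * (n - 1 choose 3)" .
  qed
  have z: "card (Av 0 {[1,2,4,3],[2,1,4,3],[3,2,1]}) = 1" by (simp only: Av_eq Avg0) simp
  have f: "Abs_fps (\<lambda>n. of_nat (card (Av n {[1,2,4,3],[2,1,4,3],[3,2,1]}))) =
           (1 + fps_X * (1 - 2 * fps_X + 3 * fps_X ^ 2) / (1 - fps_X) ^ 4 :: rat fps)"
    by (rule fps_part[OF z c])
  show ?thesis using f c by (rule conjI)
qed

end
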